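(* Let $(p_1,\beta_1),\dots,(p_K,\beta_K)$ be pairwise distinct points with $0<p_k<1$ and $0<\beta_k\le\pi/2$. For each $k$ define $F_k:[0,1]\to[0,\pi/2]$ by $$F_k(A)=\begin{cases}0,& A\le p_k,\\[2pt] \dfrac{\pi}{2}-\arccos\dfrac{\sqrt{A^2-p_k^2}}{\sin\beta_k\sqrt{1-p_k^2}},& p_k<A<\sqrt{\sin^2\beta_k+p_k^2\cos^2\beta_k},\\[6pt] \dfrac{\pi}{2},& A\ge\sqrt{\sin^2\beta_k+p_k^2\cos^2\beta_k}.\end{cases}$$ Then $F_1,\dots,F_K$ are linearly independent functions on $[0,1]$. Consequently, for any function $C$ on $[0,1]$ of the form $C(A)=\sum_{k=1}^K w_kF_k(A)$, the weights $w_1,\dots,w_K$ are uniquely determined by $C$.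
   Context: Bin model: the population is divided into bins, each bin $k$ consisting of biaxial ellipsoids with elongation $p_k$ and spin latitude $\beta_k$ (spin longitudes and viewing longitudes isotropic, viewing directions in the reference plane), with occupation number $w_k$. $F_k$ is the corresponding contribution to the cumulative distribution function $C(A)$ of the inverse amplitude $A$. *)

theory Defs
  imports "HOL-Analysis.Analysis"
begin

text \<open>Contribution F_k of a bin with elongation p and spin latitude beta to the
  cumulative distribution function of the inverse amplitude A.\<close>
definition binF :: "real \<Rightarrow> real \<Rightarrow> real \<Rightarrow> real" where
  "binF p \<beta> A =
     (if A \<le> p then 0
      else if A < sqrt ((sin \<beta>)\<^sup>2 + p\<^sup>2 * (cos \<beta>)\<^sup>2)
      then pi / 2 - arccos (sqrt (A\<^sup>2 - p\<^sup>2) / (sin \<beta> * sqrt (1 - p\<^sup>2)))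
      else pi / 2)"

end

theory Submission
  imports Defs
begin


lemma vander:
  fixes c b :: "nat \<Rightarrow> real"
  assumes "finite S" "inj_on b S" "\<forall>n. (\<Sum>k\<in>S. c k * b k ^ n) = 0"
  shows "\<forall>k\<in>S. c k = 0"
  using assms
proof (induction S arbitrary: c rule: finite_induct)
  case empty then show ?case by simp
next
  case (insert a S)
  have ba: "\<forall>k\<in>S. b k \<noteq> b a" using insert.prems(1) insert.hyps(2)
    by (auto simp: inj_on_def)
  have inj: "inj_on b S" using insert.prems(1) by (simp add: inj_on_insert)
  have eq: "\<And>n. (\<Sum>k\<in>S. c k * b k ^ n) + c a * b a ^ n = 0"
    using insert.prems(2) insert.hyps by (simp add: add.commute)
  have "\<forall>n. (\<Sum>k\<in>S. (c k * (b k - b a)) * b k ^ n) = 0"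
  proof
    fix n
    have "(\<Sum>k\<in>S. (c k * (b k - b a)) * b k ^ n) =
      (\<Sum>k\<in>S. c k * b k ^ Suc n) - b a * (\<Sum>k\<in>S. c k * b k ^ n)"
      by (simp add: sum_subtractf sum_distrib_left algebra_simps)
    also have "\<dots> = (- c a * b a ^ Suc n) - b a * (- c a * b a ^ n)"
    proof -
      have "(\<Sum>k\<in>S. c k * b k ^ Suc n) = - c a * b a ^ Suc n"
        using eq[of "Suc n"] by linarith
      moreover have "(\<Sum>k\<in>S. c k * b k ^ n) = - c a * b a ^ n"
        using eq[of n] by linarith
      ultimately show ?thesis by simp
    qed
    also have "\<dots> = 0" by simp
    finally show "(\<Sum>k\<in>S. (c k * (b k - b a)) * b k ^ n) = 0" .
  qed
  from insert.IH[OF inj this] ba have cS: "\<forall>k\<in>S. c k = 0" by auto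
  with eq[of 0] have "c a = 0" by simp
  with cS show ?case by simp
qed

lemma deriv_zero:
  fixes f :: "real \<Rightarrow> real"
  assumes "\<forall>v\<in>{a<..<b}. f v = 0" "u \<in> {a<..<b}" "DERIV f u :> D"
  shows "D = 0"
proof (rule DERIV_local_const[OF assms(3), of "min (u-a) (b-u)"])
  show "0 < min (u-a) (b-u)" using assms(2) by simp
  show "\<forall>y. \<bar>u - y\<bar> < min (u - a) (b - u) \<longrightarrow> f u = f y"
    using assms(1,2) by (auto simp: abs_less_iff)
qed

lemma powr_step:
  fixes w Q :: "nat \<Rightarrow> real"
  assumes fin: "finite G" and pos: "\<forall>k\<in>G. b \<le> Q k"
    and z: "\<forall>u\<in>{a<..<b}. (\<Sum>k\<in>G. w k * (Q k - u) powr e) = 0" and e: "e \<noteq> 0"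
  shows "\<forall>u\<in>{a<..<b}. (\<Sum>k\<in>G. w k * (Q k - u) powr (e - 1)) = 0"
proof
  fix u assume u: "u \<in> {a<..<b}"
  have d: "DERIV (\<lambda>u. \<Sum>k\<in>G. w k * (Q k - u) powr e) u :>
     (\<Sum>k\<in>G. w k * (e * (Q k - u) powr (e - 1) * (-1)))"
  proof (rule DERIV_sum, rule DERIV_cmult)
    fix k assume "k \<in> G"
    then have "Q k - u > 0" using pos u by force
    have "DERIV (\<lambda>u. Q k - u) u :> -1" by (auto intro!: derivative_eq_intros)
    from DERIV_fun_powr[OF this \<open>Q k - u > 0\<close>, of e]
    show "DERIV (\<lambda>u. (Q k - u) powr e) u :> e * (Q k - u) powr (e - 1) * (-1)" by simp
  qed
  from deriv_zero[OF z u d] have "(\<Sum>k\<in>G. w k * (e * (Q k - u) powr (e - 1) * (-1))) = 0" .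
  then have "- e * (\<Sum>k\<in>G. w k * (Q k - u) powr (e - 1)) = 0"
    by (simp add: sum_distrib_left algebra_simps)
  with e show "(\<Sum>k\<in>G. w k * (Q k - u) powr (e - 1)) = 0" by simp
qed



lemma binF_below:
  assumes "0 \<le> u" "u \<le> p\<^sup>2" "0 < p"
  shows "binF p \<beta> (sqrt u) = 0"
proof -
  have "sqrt u \<le> sqrt (p\<^sup>2)" using assms by (simp only: real_sqrt_le_iff)
  then have "sqrt u \<le> p" using assms by simp
  then show ?thesis by (simp add: binF_def)
qed

lemma s_sq:
  assumes "0<p" "p<1" "0<\<beta>" "\<beta> \<le> pi/2"
  shows "(sin \<beta> * sqrt (1 - p\<^sup>2))\<^sup>2 = ((sin \<beta>)\<^sup>2 + p\<^sup>2 * (cos \<beta>)\<^sup>2) - p\<^sup>2"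
    and "sin \<beta> * sqrt (1 - p\<^sup>2) > 0"
proof -
  have "p\<^sup>2 < 1" using assms by (simp add: power_less_one_iff abs_less_iff)
  then show "(sin \<beta> * sqrt (1 - p\<^sup>2))\<^sup>2 = ((sin \<beta>)\<^sup>2 + p\<^sup>2 * (cos \<beta>)\<^sup>2) - p\<^sup>2"
    by (simp add: power_mult_distrib cos_squared_eq algebra_simps)
  have "sin \<beta> > 0" using assms by (intro sin_gt_zero) auto
  with \<open>p\<^sup>2 < 1\<close> show "sin \<beta> * sqrt (1 - p\<^sup>2) > 0" by simp
qed

lemma binF_inside:
  assumes "0<p" "p<1" "0<\<beta>" "\<beta> \<le> pi/2" "p\<^sup>2 < u" "u < (sin \<beta>)\<^sup>2 + p\<^sup>2 * (cos \<beta>)\<^sup>2"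
  shows "binF p \<beta> (sqrt u) = pi/2 - arccos (sqrt (u - p\<^sup>2) / (sin \<beta> * sqrt (1 - p\<^sup>2)))"
proof -
  have "sqrt (p\<^sup>2) < sqrt u" using assms by (simp only: real_sqrt_less_iff)
  then have "\<not> sqrt u \<le> p" using assms by simp
  moreover have "sqrt u < sqrt ((sin \<beta>)\<^sup>2 + p\<^sup>2 * (cos \<beta>)\<^sup>2)" using assms(6) by (simp only: real_sqrt_less_iff)
  moreover have "(sqrt u)\<^sup>2 = u" using assms(5) by (smt (verit) real_sqrt_pow2 zero_le_power2)
  ultimately show ?thesis by (simp add: binF_def)
qed

lemma h_deriv:
  fixes P Q s :: real
  assumes s: "s > 0" "s\<^sup>2 = Q - P" and u: "P < u" "u < Q"
  shows "((\<lambda>u. pi/2 - arccos (sqrt (u - P) / s)) has_real_derivative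
           1 / (2 * sqrt (Q - u) * sqrt (u - P))) (at u)"
proof -
  define x where "x = sqrt (u - P) / s"
  have x0: "x > 0" using s u by (simp add: x_def)
  have xsq: "x\<^sup>2 = (u - P) / s\<^sup>2" using u by (simp add: x_def power_divide)
  have "1 - x\<^sup>2 = (Q - u) / s\<^sup>2" using s by (simp add: xsq field_simps)
  then have "sqrt (1 - x\<^sup>2) = sqrt (Q - u) / sqrt (s\<^sup>2)" by (simp only: real_sqrt_divide)
  then have sq1: "sqrt (1 - x\<^sup>2) = sqrt (Q - u) / s" using s(1) by (simp only: real_sqrt_abs)
  have "x\<^sup>2 < 1" using \<open>1 - x\<^sup>2 = (Q - u) / s\<^sup>2\<close> u s
    by (smt (verit) divide_pos_pos zero_less_power)
  then have x1: "x < 1" using x0 by (simp add: power_less_one_iff)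
  have dg: "DERIV (\<lambda>u. sqrt (u - P) / s) u :> inverse (sqrt (u - P)) / 2 * 1 / s"
    using u s(1) by (auto intro!: derivative_eq_intros)
  have da: "DERIV arccos x :> inverse (- sqrt (1 - x\<^sup>2))" using x0 x1 by (intro DERIV_arccos) auto
  have "DERIV (\<lambda>u. pi/2 - arccos (sqrt (u - P) / s)) u :>
     0 - inverse (- sqrt (1 - x\<^sup>2)) * (inverse (sqrt (u - P)) / 2 * 1 / s)"
    using DERIV_chain2[OF da[unfolded x_def] dg] unfolding x_def
    by (intro DERIV_diff DERIV_const) (simp add: x_def)
  moreover have "0 - inverse (- sqrt (1 - x\<^sup>2)) * (inverse (sqrt (u - P)) / 2 * 1 / s)
     = 1 / (2 * sqrt (Q - u) * sqrt (u - P))"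
    using s u by (simp add: sq1 field_simps)
  ultimately show ?thesis by simp
qed



lemma main:
  fixes K :: nat and p \<beta> w :: "nat \<Rightarrow> real"
  assumes distinct: "inj_on (\<lambda>k. (p k, \<beta> k)) {..<K}"
    and p_range: "\<And>k. k < K \<Longrightarrow> 0 < p k \<and> p k < 1"
    and beta_range: "\<And>k. k < K \<Longrightarrow> 0 < \<beta> k \<and> \<beta> k \<le> pi / 2"
  shows "S \<subseteq> {..<K} \<Longrightarrow> (\<forall>A \<in> {0..1}. (\<Sum>k\<in>S. w k * binF (p k) (\<beta> k) A) = 0)
     \<Longrightarrow> \<forall>k\<in>S. w k = 0"
proof (induction "card S" arbitrary: S rule: less_induct)
  case less
  define P where "P k = (p k)\<^sup>2" for k
  define Q where "Q k = (sin (\<beta> k))\<^sup>2 + (p k)\<^sup>2 * (cos (\<beta> k))\<^sup>2" for k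
  define s where "s k = sin (\<beta> k) * sqrt (1 - (p k)\<^sup>2)" for k
  have sk: "s k > 0" "(s k)\<^sup>2 = Q k - P k" if "k < K" for k
    using s_sq[of "p k" "\<beta> k"] p_range[OF that] beta_range[OF that]
    by (auto simp: s_def P_def Q_def)
  have PQ: "0 < P k" "P k < Q k" "Q k \<le> 1" if "k < K" for k
  proof -
    show "0 < P k" using p_range[OF that] by (simp add: P_def)
    show "P k < Q k" using sk[OF that] by (smt (verit) zero_less_power)
    have "(p k)\<^sup>2 \<le> 1" using p_range[OF that] by (simp add: power_le_one)
    then have "(p k)\<^sup>2 * (cos (\<beta> k))\<^sup>2 \<le> 1 * (cos (\<beta> k))\<^sup>2" by (intro mult_right_mono) auto
    then show "Q k \<le> 1" by (simp add: Q_def sin_squared_eq)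
  qed
  have injPQ: "k = j" if "k < K" "j < K" "P k = P j" "Q k = Q j" for k j
  proof -
    have "p k = p j" using that p_range[of k] p_range[of j] by (simp add: P_def power2_eq_iff)
    have "(s k)\<^sup>2 = (s j)\<^sup>2" using sk that by simp
    then have "s k = s j" using sk(1)[of k] sk(1)[of j] that
      by (simp add: power2_eq_iff_nonneg)
    have pj1: "(p j)\<^sup>2 \<noteq> 1" using p_range[of j] that by (simp add: power2_eq_1_iff)
    then have "sin (\<beta> k) = sin (\<beta> j)" using \<open>s k = s j\<close>  \<open>p k = p j\<close> p_range[of k] that
      by (auto simp: s_def)
    then have "arcsin (sin (\<beta> k)) = arcsin (sin (\<beta> j))" by simp
    then have "\<beta> k = \<beta> j" using beta_range[of k] beta_range[of j] that
      by (simp add: arcsin_sin)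
    with \<open>p k = p j\<close> show ?thesis using distinct that by (auto simp: inj_on_def)
  qed
  show ?case
  proof (cases "S = {}")
    case True then show ?thesis by simp
  next
    case False
    have finS: "finite S" using less.prems(1) finite_subset by blast
    define P0 where "P0 = Min (P ` S)"
    have "P0 \<in> P ` S" unfolding P0_def using finS False by (intro Min_in) auto
    then obtain k0 where k0: "k0 \<in> S" "P k0 = P0" by auto
    have P0le: "P0 \<le> P k" if "k \<in> S" for k using finS that by (simp add: P0_def)
    define G where "G = {k\<in>S. P k = P0}"
    define R where "R = {P j | j. j \<in> S \<and> P j > P0} \<union> Q ` S"
    define e where "e = Min R"
    have finR: "finite R" using finS by (simp add: R_def)
    have RnE: "R \<noteq> {}" using False by (simp add: R_def)
    have eR: "e \<in> R" using Min_in[OF finR RnE] by (simp add: e_def)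
    have e_gt: "P0 < e"
    proof -
      from eR obtain j where "j \<in> S" "e = P j \<and> P j > P0 \<or> e = Q j" by (auto simp: R_def)
      then show ?thesis using P0le[of j] PQ[of j] less.prems(1) by force
    qed
    have e_leQ: "e \<le> Q k" if "k \<in> S" for k using finR that by (simp add: e_def R_def)
    have e_leP: "e \<le> P j" if "j \<in> S" "P j > P0" for j
      using finR that by (auto simp: e_def R_def intro!: Min_le)
    have e1: "e \<le> 1" using e_leQ[OF k0(1)] PQ(3)[of k0] less.prems(1) k0 by force
    define I where "I = {P0<..<e}"
    define h where "h k u = pi/2 - arccos (sqrt (u - P k) / s k)" for k u
    have GS: "G \<subseteq> S" by (auto simp: G_def)
    have finG: "finite G" using finS GS finite_subset by blast
    have zeroG: "\<forall>u\<in>I. (\<Sum>k\<in>G. w k * h k u) = 0"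
    proof
      fix u assume u: "u \<in> I"
      have u0: "0 \<le> u" using u PQ(1)[of k0] k0 less.prems(1) by (auto simp: I_def)
      have "sqrt u \<in> {0..1}" using u0 u e1 by (auto simp: I_def)
      then have "0 = (\<Sum>k\<in>S. w k * binF (p k) (\<beta> k) (sqrt u))" using less.prems(2) by simp
      also have "\<dots> = (\<Sum>k\<in>G. w k * binF (p k) (\<beta> k) (sqrt u)) + (\<Sum>k\<in>S-G. w k * binF (p k) (\<beta> k) (sqrt u))"
        using finS GS by (simp add: sum.subset_diff add.commute)
      also have "(\<Sum>k\<in>S-G. w k * binF (p k) (\<beta> k) (sqrt u)) = 0"
      proof (rule sum.neutral, rule ballI)
        fix j assume j: "j \<in> S - G"
        then have "P j > P0" using P0le[of j] by (auto simp: G_def)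
        then have "u \<le> P j" using e_leP[of j] j u by (auto simp: I_def)
        then show "w j * binF (p j) (\<beta> j) (sqrt u) = 0"
          using binF_below[OF u0, of "p j" "\<beta> j"] p_range[of j] j less.prems(1)
          by (auto simp: P_def)
      qed
      also have "(\<Sum>k\<in>G. w k * binF (p k) (\<beta> k) (sqrt u)) = (\<Sum>k\<in>G. w k * h k u)"
      proof (rule sum.cong[OF refl])
        fix k assume k: "k \<in> G"
        then have kK: "k < K" using GS less.prems(1) by auto
        have "P k < u" using k u by (auto simp: G_def I_def)
        moreover have "u < Q k" using e_leQ[of k] k GS u by (auto simp: I_def)
        ultimately show "w k * binF (p k) (\<beta> k) (sqrt u) = w k * h k u"
          using binF_inside[of "p k" "\<beta> k" u] p_range[OF kK] beta_range[OF kK]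
          by (simp add: h_def P_def Q_def s_def)
      qed
      finally show "(\<Sum>k\<in>G. w k * h k u) = 0" by simp
    qed
    have z0: "\<forall>u\<in>I. (\<Sum>k\<in>G. w k * (Q k - u) powr (- 1/2 - real 0)) = 0"
    proof
      fix u assume u: "u \<in> I"
      have d: "DERIV (\<lambda>u. \<Sum>k\<in>G. w k * h k u) u :> (\<Sum>k\<in>G. w k * (1 / (2 * sqrt (Q k - u) * sqrt (u - P k))))"
      proof (rule DERIV_sum, rule DERIV_cmult)
        fix k assume k: "k \<in> G"
        then have kK: "k < K" using GS less.prems(1) by auto
        have "P k < u" using k u by (auto simp: G_def I_def)
        moreover have "u < Q k" using e_leQ[of k] k GS u by (auto simp: I_def)
        ultimately show "DERIV (h k) u :> 1 / (2 * sqrt (Q k - u) * sqrt (u - P k))"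
          unfolding h_def[abs_def] using h_deriv[OF sk[OF kK]] by simp
      qed
      have "(\<Sum>k\<in>G. w k * (1 / (2 * sqrt (Q k - u) * sqrt (u - P k)))) = 0"
        using deriv_zero[OF zeroG[unfolded I_def] u[unfolded I_def] d] .
      moreover have "(\<Sum>k\<in>G. w k * (1 / (2 * sqrt (Q k - u) * sqrt (u - P k)))) =
          (1 / (2 * sqrt (u - P0))) * (\<Sum>k\<in>G. w k * (Q k - u) powr (- 1/2 - real 0))"
      proof -
        have "w k * (1 / (2 * sqrt (Q k - u) * sqrt (u - P k))) =
          (1 / (2 * sqrt (u - P0))) * (w k * (Q k - u) powr (- 1/2 - real 0))" if k: "k \<in> G" for k
        proof -
          have "Q k - u > 0" using e_leQ[of k] k GS u by (auto simp: I_def)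
          then have "(Q k - u) powr (- 1/2) = 1 / sqrt (Q k - u)"
            by (simp add: powr_minus_divide powr_half_sqrt)
          then show ?thesis using k by (simp add: G_def)
        qed
        then show ?thesis by (simp add: sum_distrib_left)
      qed
      moreover have "sqrt (u - P0) > 0" using u by (simp add: I_def)
      ultimately show "(\<Sum>k\<in>G. w k * (Q k - u) powr (- 1/2 - real 0)) = 0" by simp
    qed
    have zn: "\<forall>u\<in>I. (\<Sum>k\<in>G. w k * (Q k - u) powr (- 1/2 - real n)) = 0" for n
    proof (induction n)
      case 0 then show ?case using z0 by simp
    next
      case (Suc n)
      have "\<forall>u\<in>{P0<..<e}. (\<Sum>k\<in>G. w k * (Q k - u) powr (- 1/2 - real n - 1)) = 0"
        by (rule powr_step[OF finG _ Suc[unfolded I_def]]) (use e_leQ GS in auto)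
      then show ?case by (simp add: I_def algebra_simps)
    qed
    define u0 where "u0 = (P0 + e) / 2"
    have u0I: "u0 \<in> I" using e_gt by (simp add: I_def u0_def)
    have Qu0: "Q k - u0 > 0" if "k \<in> G" for k using e_leQ[of k] that GS u0I by (auto simp: I_def)
    have "\<forall>k\<in>G. w k * (Q k - u0) powr (- 1/2) = 0"
    proof (rule vander[OF finG, of "\<lambda>k. inverse (Q k - u0)"])
      show "inj_on (\<lambda>k. inverse (Q k - u0)) G"
      proof (rule inj_onI)
        fix k j assume "k \<in> G" "j \<in> G" "inverse (Q k - u0) = inverse (Q j - u0)"
        then show "k = j" using injPQ[of k j] GS less.prems(1) by (auto simp: G_def)
      qed
      show "\<forall>n. (\<Sum>k\<in>G. w k * (Q k - u0) powr (- 1 / 2) * inverse (Q k - u0) ^ n) = 0"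
      proof
        fix n
        have "(\<Sum>k\<in>G. w k * (Q k - u0) powr (- 1 / 2) * inverse (Q k - u0) ^ n) =
              (\<Sum>k\<in>G. w k * (Q k - u0) powr (- 1/2 - real n))"
        proof (rule sum.cong[OF refl])
          fix k assume k: "k \<in> G"
          have "(Q k - u0) powr (- 1/2 - real n) = (Q k - u0) powr (- 1/2) * (Q k - u0) powr (- real n)"
            by (simp add: powr_add[symmetric])
          also have "(Q k - u0) powr (- real n) = inverse (Q k - u0) ^ n"
            using Qu0[OF k] by (simp add: powr_minus powr_realpow power_inverse)
          finally show "w k * (Q k - u0) powr (- 1 / 2) * inverse (Q k - u0) ^ n = w k * (Q k - u0) powr (- 1/2 - real n)"
            by simp
        qed
        also have "\<dots> = 0" using zn u0I by blast
        finally show "(\<Sum>k\<in>G. w k * (Q k - u0) powr (- 1 / 2) * inverse (Q k - u0) ^ n) = 0" .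
      qed
    qed
    then have wG: "\<forall>k\<in>G. w k = 0" using Qu0 by auto
    have cardlt: "card (S - G) < card S"
      using k0 finS by (intro psubset_card_mono) (auto simp: G_def)
    have "\<forall>A\<in>{0..1}. (\<Sum>k\<in>S - G. w k * binF (p k) (\<beta> k) A) = 0"
    proof
      fix A assume A: "A \<in> {0..1::real}"
      have "(\<Sum>k\<in>S. w k * binF (p k) (\<beta> k) A) = (\<Sum>k\<in>G. w k * binF (p k) (\<beta> k) A) + (\<Sum>k\<in>S-G. w k * binF (p k) (\<beta> k) A)"
        using finS GS by (simp add: sum.subset_diff add.commute)
      then show "(\<Sum>k\<in>S - G. w k * binF (p k) (\<beta> k) A) = 0" using less.prems(2) A wG by simp
    qed
    from less.hyps[OF cardlt _ this] less.prems(1) have "\<forall>k\<in>S-G. w k = 0" by auto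
    with wG show ?thesis by blast
  qed
qed

theorem theorem2:
  fixes K :: nat and p \<beta> :: "nat \<Rightarrow> real"
  assumes distinct: "inj_on (\<lambda>k. (p k, \<beta> k)) {..<K}"
    and p_range: "\<And>k. k < K \<Longrightarrow> 0 < p k \<and> p k < 1"
    and beta_range: "\<And>k. k < K \<Longrightarrow> 0 < \<beta> k \<and> \<beta> k \<le> pi / 2"
  shows "(\<forall>w :: nat \<Rightarrow> real.
            (\<forall>A \<in> {0..1}. (\<Sum>k<K. w k * binF (p k) (\<beta> k) A) = 0)
            \<longrightarrow> (\<forall>k<K. w k = 0))
       \<and> (\<forall>w w' :: nat \<Rightarrow> real.
            (\<forall>A \<in> {0..1}. (\<Sum>k<K. w k * binF (p k) (\<beta> k) A)
                          = (\<Sum>k<K. w' k * binF (p k) (\<beta> k) A))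
            \<longrightarrow> (\<forall>k<K. w k = w' k))"
proof (rule conjI)
  show "\<forall>w :: nat \<Rightarrow> real. (\<forall>A \<in> {0..1}. (\<Sum>k<K. w k * binF (p k) (\<beta> k) A) = 0) \<longrightarrow> (\<forall>k<K. w k = 0)"
    using main[OF distinct p_range beta_range, of "{..<K}"] by auto
  show "\<forall>w w' :: nat \<Rightarrow> real.
            (\<forall>A \<in> {0..1}. (\<Sum>k<K. w k * binF (p k) (\<beta> k) A)
                          = (\<Sum>k<K. w' k * binF (p k) (\<beta> k) A))
            \<longrightarrow> (\<forall>k<K. w k = w' k)"
  proof (rule allI, rule allI, rule impI)
    fix w w' :: "nat \<Rightarrow> real"
    assume h: "\<forall>A\<in>{0..1}. (\<Sum>k<K. w k * binF (p k) (\<beta> k) A) = (\<Sum>k<K. w' k * binF (p k) (\<beta> k) A)"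
    have "\<forall>A\<in>{0..1}. (\<Sum>k<K. (\<lambda>k. w k - w' k) k * binF (p k) (\<beta> k) A) = 0"
      using h by (simp add: left_diff_distrib sum_subtractf)
    then show "\<forall>k<K. w k = w' k" using main[OF distinct p_range beta_range, of "{..<K}" "\<lambda>k. w k - w' k"] by auto
  qed
qed

end
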